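(* Let $G$ be a graph that has exactly three odd cycles. Then the intersection of every two of its odd cycles is either empty or a path.
   Context: All graphs are finite and simple. An odd cycle is a cycle (subgraph) of odd length. A path may consist of a single vertex. *)

theory Defs
  imports Main
begin

definition simple_graph :: "'a set \<Rightarrow> 'a set set \<Rightarrow> bool" where
  "simple_graph V E \<longleftrightarrow> finite V \<and>
     (\<forall>e\<in>E. \<exists>u v. u \<noteq> v \<and> u \<in> V \<and> v \<in> V \<and> e = {u, v})"

definition subgraph :: "('a set \<times> 'a set set) \<Rightarrow> ('a set \<times> 'a set set) \<Rightarrow> bool" where
  "subgraph H G \<longleftrightarrow> fst H \<subseteq> fst G \<and> snd H \<subseteq> snd G"

definition cycle_graph :: "'a list \<Rightarrow> ('a set \<times> 'a set set)" where
  "cycle_graph vs = (set vs, {{vs ! i, vs ! ((i + 1) mod length vs)} | i. i < length vs})"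

definition is_odd_cycle :: "('a set \<times> 'a set set) \<Rightarrow> bool" where
  "is_odd_cycle H \<longleftrightarrow> (\<exists>vs. distinct vs \<and> length vs \<ge> 3 \<and> odd (length vs) \<and> H = cycle_graph vs)"

definition odd_cycles :: "'a set \<Rightarrow> 'a set set \<Rightarrow> ('a set \<times> 'a set set) set" where
  "odd_cycles V E = {H. subgraph H (V, E) \<and> is_odd_cycle H}"

definition path_graph :: "'a list \<Rightarrow> ('a set \<times> 'a set set)" where
  "path_graph vs = (set vs, {{vs ! i, vs ! Suc i} | i. Suc i < length vs})"

definition is_path :: "('a set \<times> 'a set set) \<Rightarrow> bool" where
  "is_path H \<longleftrightarrow> (\<exists>vs. distinct vs \<and> vs \<noteq> [] \<and> H = path_graph vs)"

definition graph_inter :: "('a set \<times> 'a set set) \<Rightarrow> ('a set \<times> 'a set set) \<Rightarrow> ('a set \<times> 'a set set)" where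
  "graph_inter H1 H2 = (fst H1 \<inter> fst H2, snd H1 \<inter> snd H2)"

end

theory Submission
  imports Defs
begin


definition pe :: "'a list \<Rightarrow> 'a set set" where "pe l = snd (path_graph l)"

lemma pe_idx: "pe l = {{l ! i, l ! Suc i} | i. Suc i < length l}"
  by (simp add: pe_def path_graph_def)

lemma pe_Nil[simp]: "pe [] = {}" by (simp add: pe_idx)
lemma pe_single[simp]: "pe [x] = {}" by (simp add: pe_idx)
lemma pe_Cons2[simp]: "pe (x # y # w) = insert {x, y} (pe (y # w))"
proof -
  have "{{(x#y#w) ! i, (x#y#w) ! Suc i} | i. Suc i < length (x#y#w)}
      = insert {x,y} {{(y#w) ! i, (y#w) ! Suc i} | i. Suc i < length (y#w)}"
  proof (rule set_eqI, rule iffI)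
    fix e assume "e \<in> {{(x#y#w) ! i, (x#y#w) ! Suc i} | i. Suc i < length (x#y#w)}"
    then obtain i where i: "e = {(x#y#w) ! i, (x#y#w) ! Suc i}" "Suc i < length (x#y#w)" by blast
    show "e \<in> insert {x,y} {{(y#w) ! i, (y#w) ! Suc i} | i. Suc i < length (y#w)}"
    proof (cases i)
      case 0 then show ?thesis using i by simp
    next
      case (Suc k) then show ?thesis using i by auto
    qed
  next
    fix e assume "e \<in> insert {x,y} {{(y#w) ! i, (y#w) ! Suc i} | i. Suc i < length (y#w)}"
    then show "e \<in> {{(x#y#w) ! i, (x#y#w) ! Suc i} | i. Suc i < length (x#y#w)}"
    proof
      assume "e = {x,y}" then show ?thesis by (auto intro!: exI[of _ 0])
    next
      assume "e \<in> {{(y#w) ! i, (y#w) ! Suc i} | i. Suc i < length (y#w)}"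
      then obtain i where "e = {(y#w) ! i, (y#w) ! Suc i}" "Suc i < length (y#w)" by blast
      then show ?thesis by (auto intro!: exI[of _ "Suc i"])
    qed
  qed
  then show ?thesis by (simp only: pe_idx)
qed

lemma pe_append: "pe (u @ x # v) = pe (u @ [x]) \<union> pe (x # v)"
proof (induction u)
  case Nil then show ?case by simp
next
  case (Cons a u) then show ?case by (cases u) auto
qed

lemma pe_rev: "pe (rev l) = pe l"
proof (induction l)
  case Nil then show ?case by simp
next
  case (Cons x l)
  show ?case
  proof (cases l)
    case Nil then show ?thesis by simp
  next
    case (Cons y l')
    have "pe (rev (x # l)) = pe (rev l' @ y # [x])" using Cons by simp
    also have "\<dots> = pe (rev l' @ [y]) \<union> pe [y, x]" by (rule pe_append)
    also have "\<dots> = pe l \<union> {{x, y}}" using Cons.IH Cons by (simp add: insert_commute)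
    finally show ?thesis using Cons by auto
  qed
qed

lemma pe_sub: "e \<in> pe l \<Longrightarrow> \<exists>a b. e = {a, b} \<and> a \<in> set l \<and> b \<in> set l"
proof -
  assume "e \<in> pe l"
  then obtain i where "e = {l ! i, l ! Suc i}" "Suc i < length l" unfolding pe_idx by blast
  then show ?thesis by (intro exI[of _ "l!i"] exI[of _ "l!Suc i"]) auto
qed

lemma pe_upt:
  assumes "i \<le> j"
  shows "pe (map f [i..<Suc j]) = {{f k, f (Suc k)} | k. i \<le> k \<and> k < j}"
proof -
  have "pe (map f [i..<Suc j]) = {{f (i + k), f (i + Suc k)} | k. Suc k < Suc j - i}"
  proof -
    have len: "length (map f [i..<Suc j]) = Suc j - i" by (simp only: length_map length_upt)
    have nth: "\<And>k. k < Suc j - i \<Longrightarrow> map f [i..<Suc j] ! k = f (i + k)"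
      by (simp del: upt_Suc)
    show ?thesis unfolding pe_idx len
    proof (rule set_eqI, rule iffI)
      fix e assume "e \<in> {{map f [i..<Suc j] ! k, map f [i..<Suc j] ! Suc k} | k. Suc k < Suc j - i}"
      then obtain k where "e = {map f [i..<Suc j] ! k, map f [i..<Suc j] ! Suc k}" "Suc k < Suc j - i" by blast
      then show "e \<in> {{f (i + k), f (i + Suc k)} | k. Suc k < Suc j - i}" using nth[of k] nth[of "Suc k"]
        by auto
    next
      fix e assume "e \<in> {{f (i + k), f (i + Suc k)} | k. Suc k < Suc j - i}"
      then obtain k where "e = {f (i + k), f (i + Suc k)}" "Suc k < Suc j - i" by blast
      then show "e \<in> {{map f [i..<Suc j] ! k, map f [i..<Suc j] ! Suc k} | k. Suc k < Suc j - i}"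
        using nth[of k] nth[of "Suc k"] by (auto intro!: exI[of _ k])
    qed
  qed
  also have "\<dots> = {{f k, f (Suc k)} | k. i \<le> k \<and> k < j}"
  proof (rule set_eqI, rule iffI)
    fix e assume "e \<in> {{f (i + k), f (i + Suc k)} | k. Suc k < Suc j - i}"
    then obtain k where "e = {f (i + k), f (i + Suc k)}" "Suc k < Suc j - i" by blast
    then show "e \<in> {{f k, f (Suc k)} | k. i \<le> k \<and> k < j}"
      by (auto intro!: exI[of _ "i + k"])
  next
    fix e assume "e \<in> {{f k, f (Suc k)} | k. i \<le> k \<and> k < j}"
    then obtain k where "e = {f k, f (Suc k)}" "i \<le> k" "k < j" by blast
    then show "e \<in> {{f (i + k), f (i + Suc k)} | k. Suc k < Suc j - i}"
      by (auto intro!: exI[of _ "k - i"])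
  qed
  finally show ?thesis .
qed


definition cyc :: "'a list \<Rightarrow> nat \<Rightarrow> 'a" where "cyc vs k = vs ! (k mod length vs)"
definition ced :: "'a list \<Rightarrow> nat \<Rightarrow> 'a set" where "ced vs k = {cyc vs k, cyc vs (Suc k)}"

lemma cyc_mod[simp]: "cyc vs (k mod length vs) = cyc vs k"
  by (simp add: cyc_def)

lemma cyc_add[simp]: "cyc vs (k + length vs) = cyc vs k"
  by (simp add: cyc_def)

lemma cyc_lt: "k < length vs \<Longrightarrow> cyc vs k = vs ! k"
  by (simp add: cyc_def)

lemma cyc_in: "vs \<noteq> [] \<Longrightarrow> cyc vs k \<in> set vs"
  by (simp add: cyc_def)

lemma cyc_eq: "distinct vs \<Longrightarrow> vs \<noteq> [] \<Longrightarrow> cyc vs a = cyc vs b \<longleftrightarrow> a mod length vs = b mod length vs"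
  by (simp add: cyc_def nth_eq_iff_index_eq)

lemma cyc_cong: "a mod length vs = b mod length vs \<Longrightarrow> cyc vs a = cyc vs b"
  by (metis cyc_mod)

lemma set_cyc: "vs \<noteq> [] \<Longrightarrow> set vs = range (cyc vs)"
proof
  assume "vs \<noteq> []"
  show "set vs \<subseteq> range (cyc vs)"
  proof
    fix x assume "x \<in> set vs"
    then obtain i where "i < length vs" "x = vs ! i" by (metis in_set_conv_nth)
    then show "x \<in> range (cyc vs)" by (metis cyc_lt rangeI)
  qed
  show "range (cyc vs) \<subseteq> set vs" using \<open>vs \<noteq> []\<close> cyc_in by blast
qed

lemma ced_mod: "ced vs (k mod length vs) = ced vs k"
  unfolding ced_def by (metis cyc_cong cyc_mod mod_Suc_eq)

lemma cg_cyc: "vs \<noteq> [] \<Longrightarrow> cycle_graph vs = (range (cyc vs), range (ced vs))"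
proof -
  assume ne: "vs \<noteq> []"
  have "{{vs ! i, vs ! ((i + 1) mod length vs)} | i. i < length vs} = range (ced vs)"
  proof (rule set_eqI, rule iffI)
    fix e assume "e \<in> {{vs ! i, vs ! ((i + 1) mod length vs)} | i. i < length vs}"
    then obtain i where "e = {vs ! i, vs ! ((i + 1) mod length vs)}" "i < length vs" by blast
    then have "e = ced vs i" by (simp add: ced_def cyc_def)
    then show "e \<in> range (ced vs)" by simp
  next
    fix e assume "e \<in> range (ced vs)"
    then obtain k where "e = ced vs k" by blast
    then have "e = ced vs (k mod length vs)" by (simp add: ced_mod)
    moreover have "k mod length vs < length vs" using ne by simp
    ultimately show "e \<in> {{vs ! i, vs ! ((i + 1) mod length vs)} | i. i < length vs}"
      by (auto simp: ced_def cyc_def)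
  qed
  then show ?thesis using set_cyc[OF ne] by (simp add: cycle_graph_def)
qed

lemma cyc_rotate: "vs \<noteq> [] \<Longrightarrow> cyc (rotate r vs) t = cyc vs (r + t)"
  unfolding cyc_def by (simp add: nth_rotate mod_add_right_eq)

lemma range_shift:
  fixes h :: "nat \<Rightarrow> 'b" and n :: nat
  assumes "\<And>k. h (k + n) = h k" "n > 0"
  shows "range (\<lambda>t. h (r + t)) = range h"
proof
  show "range (\<lambda>t. h (r + t)) \<subseteq> range h" by auto
  show "range h \<subseteq> range (\<lambda>t. h (r + t))"
  proof
    fix x assume "x \<in> range h"
    then obtain k where k: "x = h k" by blast
    have "\<And>q. h (k + n * q) = h k"
    proof -
      fix q show "h (k + n * q) = h k"
      proof (induction q)
        case 0 then show ?case by simp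
      next
        case (Suc q)
        have "k + n * Suc q = (k + n * q) + n" by simp
        then show ?case using assms(1)[of "k + n * q"] Suc.IH by (simp only:)
      qed
    qed
    then have "h (k + n * r) = h k" .
    moreover have "r \<le> n * r" using assms(2) by simp
    then have "k + n * r = r + (k + n * r - r)" by linarith
    ultimately show "x \<in> range (\<lambda>t. h (r + t))" using k by (metis rangeI)
  qed
qed

lemma cg_rotate: "cycle_graph (rotate r vs) = cycle_graph vs"
proof (cases "vs = []")
  case True then show ?thesis by simp
next
  case False
  then have ne: "rotate r vs \<noteq> []" by simp
  have 1: "range (cyc (rotate r vs)) = range (cyc vs)"
    using range_shift[of "cyc vs" "length vs" r] False by (simp add: cyc_rotate[OF False])
  have 2: "range (ced (rotate r vs)) = range (ced vs)"
  proof -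
    have "ced (rotate r vs) = (\<lambda>t. ced vs (r + t))"
      by (rule ext) (simp add: ced_def cyc_rotate[OF False])
    moreover have "\<And>k. ced vs (k + length vs) = ced vs k"
    proof -
      fix k have "cyc vs (Suc (k + length vs)) = cyc vs (Suc k)" using cyc_add[of vs "Suc k"] by simp
      then show "ced vs (k + length vs) = ced vs k" by (simp add: ced_def)
    qed
    ultimately show ?thesis using range_shift[of "ced vs" "length vs" r] False by simp
  qed
  show ?thesis using cg_cyc[OF ne] cg_cyc[OF False] 1 2 by simp
qed

lemma mod_two_step:
  assumes "(n::nat) \<ge> 3" "a mod n = Suc b mod n" "Suc a mod n = b mod n"
  shows False
proof -
  have "Suc a mod n = Suc (Suc b) mod n" by (metis assms(2) mod_Suc_eq)
  then have "(b + 2) mod n = b mod n" using assms(3) by simp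
  then have e: "(b mod n + 2) mod n = b mod n" by (simp only: mod_add_left_eq)
  have lt: "b mod n < n" using assms(1) by simp
  show False
  proof (cases "b mod n + 2 < n")
    case True
    then show False using e by simp
  next
    case False
    then have "n \<le> b mod n + 2" by linarith
    then have "(b mod n + 2) mod n = (b mod n + 2 - n) mod n" by (rule le_mod_geq)
    also have "\<dots> = b mod n + 2 - n" using lt assms(1) by (intro mod_less) linarith
    finally show False using e assms(1) False by linarith
  qed
qed

lemma ced_eq:
  assumes "distinct vs" "length vs \<ge> 3"
  shows "ced vs a = ced vs b \<longleftrightarrow> a mod length vs = b mod length vs"
proof
  assume "a mod length vs = b mod length vs"
  then show "ced vs a = ced vs b" by (metis ced_mod)
next
  have ne: "vs \<noteq> []" using assms by auto
  assume "ced vs a = ced vs b"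
  then have "(cyc vs a = cyc vs b \<and> cyc vs (Suc a) = cyc vs (Suc b)) \<or>
             (cyc vs a = cyc vs (Suc b) \<and> cyc vs (Suc a) = cyc vs b)"
    unfolding ced_def by (metis doubleton_eq_iff)
  then show "a mod length vs = b mod length vs"
    using mod_two_step[OF assms(2)] cyc_eq[OF assms(1) ne] by blast
qed



lemma Suc_mod_if: "i < n \<Longrightarrow> Suc i mod n = (if Suc i < n then Suc i else 0)"
proof (cases "Suc i < n")
  case False
  assume "i < n"
  then have "Suc i = n" using False by simp
  then show ?thesis by simp
qed simp

lemma nth_notin_take:
  assumes "distinct xs" "q < length xs"
  shows "xs ! q \<notin> set (take q xs)"
proof
  assume "xs ! q \<in> set (take q xs)"
  then obtain j where j: "j < length (take q xs)" "take q xs ! j = xs ! q" by (metis in_set_conv_nth)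
  then have "xs ! j = xs ! q" "j < q" by auto
  then show False using assms nth_eq_iff_index_eq by fastforce
qed

lemma l_nth1: "i < length vs \<Longrightarrow> (vs @ [hd vs]) ! i = vs ! i"
  by (simp add: nth_append)

lemma l_nth2: assumes "i < length vs" shows "(vs @ [hd vs]) ! Suc i = vs ! (Suc i mod length vs)"
proof (cases "Suc i < length vs")
  case True
  then show ?thesis by (simp add: nth_append)
next
  case False
  then have "Suc i = length vs" using assms by simp
  moreover have "vs \<noteq> []" using assms by auto
  ultimately show ?thesis using assms by (simp add: nth_append hd_conv_nth)
qed

lemma cg_pe: "vs \<noteq> [] \<Longrightarrow> cycle_graph vs = (set vs, pe (vs @ [hd vs]))"
proof -
  assume ne: "vs \<noteq> []"
  let ?l = "vs @ [hd vs]"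
  have "{{vs ! i, vs ! ((i + 1) mod length vs)} | i. i < length vs} = {{?l ! i, ?l ! Suc i} | i. Suc i < length ?l}"
  proof (rule set_eqI, rule iffI)
    fix e assume "e \<in> {{vs ! i, vs ! ((i + 1) mod length vs)} | i. i < length vs}"
    then obtain i where i: "e = {vs ! i, vs ! ((i + 1) mod length vs)}" "i < length vs" by blast
    then have "e = {?l ! i, ?l ! Suc i}" "Suc i < length ?l" using l_nth1[of i vs] l_nth2[of i vs] by simp_all
    then show "e \<in> {{?l ! i, ?l ! Suc i} | i. Suc i < length ?l}" by blast
  next
    fix e assume "e \<in> {{?l ! i, ?l ! Suc i} | i. Suc i < length ?l}"
    then obtain i where i: "e = {?l ! i, ?l ! Suc i}" "Suc i < length ?l" by blast
    then have "e = {vs ! i, vs ! ((i + 1) mod length vs)}" "i < length vs"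
      using l_nth1[of i vs] l_nth2[of i vs] by simp_all
    then show "e \<in> {{vs ! i, vs ! ((i + 1) mod length vs)} | i. i < length vs}" by blast
  qed
  then show ?thesis by (simp add: cycle_graph_def pe_idx)
qed

lemma glue:
  assumes "distinct P" "P \<noteq> []" "hd P = a" "last P = b" "distinct Q" "length Q \<ge> 2"
    "hd Q = b" "last Q = a" "set P \<inter> set Q \<subseteq> {a, b}"
  shows "distinct (P @ butlast (tl Q)) \<and> length (P @ butlast (tl Q)) = length P + length Q - 2
    \<and> cycle_graph (P @ butlast (tl Q)) = (set P \<union> set Q, pe P \<union> pe Q)"
proof -
  obtain Q' where Q: "Q = b # Q'" using assms(6,7) by (cases Q) auto
  have "Q' \<noteq> []" using Q assms(6) by auto
  then obtain M where Q': "Q' = M @ [a]" using assms(8) Q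
    by (metis append_butlast_last_id last_ConsR)
  have bt: "butlast (tl Q) = M" using Q Q' by simp
  have dq: "b \<notin> set M" "a \<notin> set M" "a \<noteq> b" "distinct M" using assms(5) Q Q' by auto
  have disj: "set P \<inter> set M = {}" using assms(9) Q Q' dq by auto
  obtain P' where P: "P = P' @ [b]" using assms(2,4) by (metis append_butlast_last_id)
  have aP: "a \<in> set P" using assms(2,3) by auto
  have L: "P @ M \<noteq> []" "hd (P @ M) = a" using assms(2,3) by auto
  have "(P @ M) @ [hd (P @ M)] = P' @ b # (M @ [a])" using P L by simp
  then have "pe ((P @ M) @ [hd (P @ M)]) = pe P \<union> pe Q" using P Q Q' pe_append[of P' b "M @ [a]"] by simp
  moreover have "set (P @ M) = set P \<union> set Q" using Q Q' P aP by auto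
  ultimately have "cycle_graph (P @ M) = (set P \<union> set Q, pe P \<union> pe Q)" using cg_pe[OF L(1)] by simp
  moreover have "distinct (P @ M)" using assms(1) dq disj by simp
  moreover have "length (P @ M) = length P + length Q - 2" using Q Q' by simp
  ultimately show ?thesis using bt by simp
qed

lemma arcs:
  assumes "distinct xs" "0 < q" "q < length xs"
  shows "distinct (rev (take (Suc q) xs)) \<and> length (rev (take (Suc q) xs)) = Suc q
      \<and> hd (rev (take (Suc q) xs)) = xs ! q \<and> last (rev (take (Suc q) xs)) = xs ! 0
      \<and> set (rev (take (Suc q) xs)) \<subseteq> set xs"
    "distinct (drop q xs @ [xs ! 0]) \<and> length (drop q xs @ [xs ! 0]) = length xs - q + 1
      \<and> hd (drop q xs @ [xs ! 0]) = xs ! q \<and> last (drop q xs @ [xs ! 0]) = xs ! 0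
      \<and> set (drop q xs @ [xs ! 0]) \<subseteq> set xs"
    "pe (rev (take (Suc q) xs)) \<union> pe (drop q xs @ [xs ! 0]) = snd (cycle_graph xs)"
proof -
  show "distinct (rev (take (Suc q) xs)) \<and> length (rev (take (Suc q) xs)) = Suc q
      \<and> hd (rev (take (Suc q) xs)) = xs ! q \<and> last (rev (take (Suc q) xs)) = xs ! 0
      \<and> set (rev (take (Suc q) xs)) \<subseteq> set xs"
    using assms nth_notin_take[OF assms(1,3)]
    by (auto simp: hd_rev last_rev take_Suc_conv_app_nth hd_conv_nth dest: in_set_takeD)
  have "xs ! 0 \<notin> set (drop q xs)"
  proof
    assume "xs ! 0 \<in> set (drop q xs)"
    then obtain j where j: "j < length (drop q xs)" "drop q xs ! j = xs ! 0" by (metis in_set_conv_nth)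
    then have "xs ! (q + j) = xs ! 0" "q + j < length xs" using assms by auto
    then show False using assms nth_eq_iff_index_eq by fastforce
  qed
  then show "distinct (drop q xs @ [xs ! 0]) \<and> length (drop q xs @ [xs ! 0]) = length xs - q + 1
      \<and> hd (drop q xs @ [xs ! 0]) = xs ! q \<and> last (drop q xs @ [xs ! 0]) = xs ! 0
      \<and> set (drop q xs @ [xs ! 0]) \<subseteq> set xs"
  proof (intro conjI)
    show "distinct (drop q xs @ [xs ! 0])" using assms \<open>xs ! 0 \<notin> set (drop q xs)\<close> by simp
    show "length (drop q xs @ [xs ! 0]) = length xs - q + 1" by simp
    show "hd (drop q xs @ [xs ! 0]) = xs ! q" using assms by (simp add: hd_drop_conv_nth)
    show "last (drop q xs @ [xs ! 0]) = xs ! 0" by simp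
    have "0 < length xs" using assms by linarith
    then have "xs ! 0 \<in> set xs" by (rule nth_mem)
    then show "set (drop q xs @ [xs ! 0]) \<subseteq> set xs" using set_drop_subset[of q xs] by simp
  qed
  have ne: "xs \<noteq> []" using assms by auto
  have e1: "xs @ [hd xs] = take q xs @ xs ! q # (drop (Suc q) xs @ [xs ! 0])"
    using assms ne by (simp add: id_take_nth_drop hd_conv_nth)
  have e2: "take q xs @ [xs ! q] = take (Suc q) xs" using assms by (simp add: take_Suc_conv_app_nth)
  have e3: "xs ! q # (drop (Suc q) xs @ [xs ! 0]) = drop q xs @ [xs ! 0]" using assms
    by (simp add: Cons_nth_drop_Suc)
  have "pe (xs @ [hd xs]) = pe (take q xs @ [xs ! q]) \<union> pe (xs ! q # (drop (Suc q) xs @ [xs ! 0]))"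
    unfolding e1 by (rule pe_append)
  then have "pe (xs @ [hd xs]) = pe (take (Suc q) xs) \<union> pe (drop q xs @ [xs ! 0])"
    by (simp only: e2 e3)
  then show "pe (rev (take (Suc q) xs)) \<union> pe (drop q xs @ [xs ! 0]) = snd (cycle_graph xs)"
    using cg_pe[OF ne] by (simp add: pe_rev)
qed



lemma bridge_cycle:
  assumes xs: "distinct xs" "length xs \<ge> 3" "odd (length xs)"
    and sub1: "subgraph (cycle_graph xs) (V, E)"
    and P: "distinct P" "length P \<ge> 2" "hd P = a" "last P = b" "a \<noteq> b" "a \<in> set xs" "b \<in> set xs"
       "set P \<inter> set xs \<subseteq> {a, b}" "set P \<subseteq> V" "pe P \<subseteq> E"
       "length P \<ge> 3 \<or> {a, b} \<notin> snd (cycle_graph xs)"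
  shows "\<exists>D \<in> odd_cycles V E. pe P \<subseteq> snd D \<and> snd D \<subseteq> snd (cycle_graph xs) \<union> pe P"
proof -
  have key: "\<exists>D \<in> odd_cycles V E. pe P \<subseteq> snd D \<and> snd D \<subseteq> snd (cycle_graph xs) \<union> pe P"
    if Q: "distinct Q" "length Q \<ge> 2" "hd Q = b" "last Q = a" "set Q \<subseteq> set xs"
      "pe Q \<subseteq> snd (cycle_graph xs)" "odd (length P + length Q - 2)" "length P + length Q - 2 \<ge> 3"
    for Q
  proof -
    have Pne: "P \<noteq> []" using P by auto
    have "set P \<inter> set Q \<subseteq> {a, b}" using P(8) Q(5) by blast
    then have g: "distinct (P @ butlast (tl Q)) \<and> length (P @ butlast (tl Q)) = length P + length Q - 2
      \<and> cycle_graph (P @ butlast (tl Q)) = (set P \<union> set Q, pe P \<union> pe Q)"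
      using glue[OF P(1) Pne P(3) P(4) Q(1) Q(2) Q(3) Q(4)] by blast
    let ?D = "cycle_graph (P @ butlast (tl Q))"
    have "is_odd_cycle ?D" unfolding is_odd_cycle_def using g Q(7) Q(8) by (intro exI[of _ "P @ butlast (tl Q)"]) auto
    moreover have "set xs \<subseteq> V" "snd (cycle_graph xs) \<subseteq> E" using sub1
      by (auto simp: subgraph_def cycle_graph_def)
    then have "subgraph ?D (V, E)" using g P(9) P(10) Q(5) Q(6) by (auto simp: subgraph_def)
    ultimately have "?D \<in> odd_cycles V E" by (simp add: odd_cycles_def)
    moreover have "pe P \<subseteq> snd ?D \<and> snd ?D \<subseteq> snd (cycle_graph xs) \<union> pe P" using g Q(6) by auto
    ultimately show ?thesis by blast
  qed
  obtain p where p: "p < length xs" "xs ! p = a" using P(6) by (metis in_set_conv_nth)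
  define xs' where "xs' = rotate p xs"
  have ne: "xs \<noteq> []" using xs by auto
  have xs': "distinct xs'" "length xs' = length xs" "cycle_graph xs' = cycle_graph xs" "set xs' = set xs"
    unfolding xs'_def by (simp_all add: xs cg_rotate)
  have ne': "xs' \<noteq> []" using ne xs' by auto
  have a0: "xs' ! 0 = a"
  proof -
    have "cyc xs' 0 = cyc xs p" unfolding xs'_def using cyc_rotate[OF ne, of p 0] by simp
    then show ?thesis using p cyc_lt[of 0 xs'] cyc_lt[of p xs] ne' by simp
  qed
  have c0: "cyc xs' 0 = a" using a0 ne' cyc_lt[of 0 xs'] by simp
  obtain q where q: "q < length xs'" "xs' ! q = b" using P(7) xs' by (metis in_set_conv_nth)
  have q0: "0 < q" using q a0 P(5) by (cases q) auto
  note A = arcs[OF xs'(1) q0 q(1)]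
  let ?n = "length xs"
  have chord: "2 \<le> q \<and> q + 2 \<le> ?n" if "length P = 2"
  proof -
    have nab: "{a, b} \<notin> snd (cycle_graph xs')" using P(11) that xs' by simp
    have E': "snd (cycle_graph xs') = range (ced xs')" using cg_cyc[OF ne'] by simp
    have "q \<noteq> 1"
    proof
      assume "q = 1"
      then have "ced xs' 0 = {a, b}" using a0 q cyc_lt[of 0 xs'] cyc_lt[of 1 xs'] q0 ne'
        by (simp add: ced_def)
      then show False using nab E' by (metis rangeI)
    qed
    moreover have "q \<noteq> ?n - 1"
    proof
      assume qn: "q = ?n - 1"
      have "cyc xs' (Suc (?n - 1)) = cyc xs' 0" using cyc_add[of xs' 0] xs' xs by simp
      then have "ced xs' (?n - 1) = {b, a}" using c0 q qn cyc_lt[of "?n - 1" xs'] xs' ne'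
        by (simp add: ced_def)
      then show False using nab E' by (metis rangeI insert_commute)
    qed
    ultimately show ?thesis using q0 q xs' by linarith
  qed
  have lP: "length P \<ge> 2" using P by simp
  have E1: "pe (rev (take (Suc q) xs')) \<subseteq> snd (cycle_graph xs)" using A(3) xs' by auto
  have E2: "pe (drop q xs' @ [xs' ! 0]) \<subseteq> snd (cycle_graph xs)" using A(3) xs' by auto
  show ?thesis
  proof (cases "odd (length P + Suc q - 2)")
    case True
    have "length P + Suc q - 2 \<ge> 3" using chord q0 P(11) lP by (cases "length P = 2") auto
    moreover have "distinct (rev (take (Suc q) xs'))" "length (rev (take (Suc q) xs')) \<ge> 2"
      "hd (rev (take (Suc q) xs')) = b" "last (rev (take (Suc q) xs')) = a"
      "set (rev (take (Suc q) xs')) \<subseteq> set xs" using A(1) a0 q q0 xs' by auto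
    moreover have "odd (length P + length (rev (take (Suc q) xs')) - 2)" using True A(1) by simp
    ultimately show ?thesis using key[of "rev (take (Suc q) xs')"] E1 A(1) by simp
  next
    case False
    then have odd2: "odd (length P + (?n - q + 1) - 2)" using xs(3) q xs' lP by presburger
    have "length P + (?n - q + 1) - 2 \<ge> 3" using chord q0 q xs' P(11) lP by (cases "length P = 2") auto
    moreover have "distinct (drop q xs' @ [xs' ! 0])" "length (drop q xs' @ [xs' ! 0]) \<ge> 2"
      "hd (drop q xs' @ [xs' ! 0]) = b" "last (drop q xs' @ [xs' ! 0]) = a"
      "set (drop q xs' @ [xs' ! 0]) \<subseteq> set xs" using A(2) a0 q q0 xs' by auto
    moreover have "odd (length P + length (drop q xs' @ [xs' ! 0]) - 2)" using odd2 A(2) xs' by simp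
    ultimately show ?thesis using key[of "drop q xs' @ [xs' ! 0]"] E2 A(2) xs' by simp
  qed
qed



lemma mod_cancel_nat:
  fixes a b c n :: nat
  assumes "(a + c) mod n = (b + c) mod n" "n > 0"
  shows "a mod n = b mod n"
proof -
  have "c \<le> n * c" using assms(2) by simp
  have "(a + c + (n * c - c)) mod n = (b + c + (n * c - c)) mod n"
    using mod_add_cong[OF assms(1), of "n * c - c" "n * c - c"] by simp
  moreover have "a + c + (n * c - c) = a + c * n" "b + c + (n * c - c) = b + c * n"
    using \<open>c \<le> n * c\<close> by (simp_all add: mult.commute)
  ultimately show ?thesis by simp
qed

lemma incident:
  assumes "distinct vs" "length vs \<ge> 3"
  shows "{e \<in> range (ced vs). cyc vs j \<in> e} = {ced vs (j + length vs - 1), ced vs j}"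
    "card {e \<in> range (ced vs). cyc vs j \<in> e} = 2"
proof -
  let ?n = "length vs"
  have ne: "vs \<noteq> []" using assms by auto
  have s: "Suc (j + ?n - 1) = j + ?n" using assms by simp
  show eq: "{e \<in> range (ced vs). cyc vs j \<in> e} = {ced vs (j + ?n - 1), ced vs j}"
  proof (rule set_eqI, rule iffI)
    fix e assume "e \<in> {e \<in> range (ced vs). cyc vs j \<in> e}"
    then obtain k where k: "e = ced vs k" "cyc vs j \<in> ced vs k" by blast
    then have "cyc vs k = cyc vs j \<or> cyc vs (Suc k) = cyc vs j" by (auto simp: ced_def)
    then show "e \<in> {ced vs (j + ?n - 1), ced vs j}"
    proof
      assume "cyc vs k = cyc vs j"
      then have "k mod ?n = j mod ?n" using cyc_eq[OF assms(1) ne] by simp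
      then have "ced vs k = ced vs j" using ced_eq[OF assms] by simp
      then show ?thesis using k by simp
    next
      assume "cyc vs (Suc k) = cyc vs j"
      then have "cyc vs (Suc k) = cyc vs (Suc (j + ?n - 1))" using s by simp
      then have "Suc k mod ?n = Suc (j + ?n - 1) mod ?n" using cyc_eq[OF assms(1) ne] by simp
      then have "(k + 1) mod ?n = ((j + ?n - 1) + 1) mod ?n" by simp
      then have "k mod ?n = (j + ?n - 1) mod ?n" using mod_cancel_nat ne by blast
      then have "ced vs k = ced vs (j + ?n - 1)" using ced_eq[OF assms] by simp
      then show ?thesis using k by simp
    qed
  next
    fix e assume "e \<in> {ced vs (j + ?n - 1), ced vs j}"
    moreover have "cyc vs j \<in> ced vs j" by (simp add: ced_def)
    moreover have "cyc vs j \<in> ced vs (j + ?n - 1)" using s cyc_add[of vs j] by (simp add: ced_def)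
    ultimately show "e \<in> {e \<in> range (ced vs). cyc vs j \<in> e}" by auto
  qed
  have "ced vs (j + ?n - 1) \<noteq> ced vs j"
  proof
    assume "ced vs (j + ?n - 1) = ced vs j"
    then have "(j + ?n - 1) mod ?n = j mod ?n" using ced_eq[OF assms] by simp
    then have "(?n - 1 + j) mod ?n = (0 + j) mod ?n" using assms by (simp add: add.commute)
    then have "(?n - 1) mod ?n = 0 mod ?n" using mod_cancel_nat ne by blast
    then show False using assms by simp
  qed
  then show "card {e \<in> range (ced vs). cyc vs j \<in> e} = 2" using eq by simp
qed

lemma cycle_sub:
  assumes dx: "distinct xs" "length xs \<ge> 3" and dy: "distinct ys" "length ys \<ge> 3"
    and sub: "snd (cycle_graph ys) \<subseteq> snd (cycle_graph xs)"
  shows "cycle_graph ys = cycle_graph xs"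
proof -
  have nx: "xs \<noteq> []" and ny: "ys \<noteq> []" using dx dy by auto
  have EX: "snd (cycle_graph xs) = range (ced xs)" and EY: "snd (cycle_graph ys) = range (ced ys)"
    using cg_cyc[OF nx] cg_cyc[OF ny] by simp_all
  have X: "set xs = range (cyc xs)" and Y: "set ys = range (cyc ys)" using set_cyc nx ny by auto
  have edge_in: "e \<subseteq> set vs" if "e \<in> range (ced vs)" "vs \<noteq> []" for e and vs :: "'a list"
    using that cyc_in[OF that(2)] by (auto simp: ced_def)
  have YX: "set ys \<subseteq> set xs"
  proof
    fix v assume vy: "v \<in> set ys"
    obtain t where "v = cyc ys t" using vy unfolding Y by blast
    then have "v \<in> ced ys t" by (simp add: ced_def)
    moreover have "ced ys t \<in> range (ced xs)" using sub EX EY by auto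
    ultimately show "v \<in> set xs" using edge_in nx by blast
  qed
  have loc: "{e \<in> range (ced xs). v \<in> e} \<subseteq> range (ced ys)" if vy: "v \<in> set ys" for v
  proof -
    obtain t where t: "v = cyc ys t" using vy Y by auto
    obtain j where j: "v = cyc xs j" using vy YX X by auto
    have "{e \<in> range (ced ys). v \<in> e} \<subseteq> {e \<in> range (ced xs). v \<in> e}" using sub EX EY by auto
    moreover have "card {e \<in> range (ced ys). v \<in> e} = 2" using incident(2)[OF dy, of t] t by simp
    moreover have "card {e \<in> range (ced xs). v \<in> e} = 2" using incident(2)[OF dx, of j] j by simp
    moreover have "finite {e \<in> range (ced xs). v \<in> e}" using incident(1)[OF dx, of j] j by simp
    ultimately have "{e \<in> range (ced ys). v \<in> e} = {e \<in> range (ced xs). v \<in> e}"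
      by (metis card_subset_eq)
    then show ?thesis by blast
  qed
  have step: "cyc xs (Suc j) \<in> set ys" if cj: "cyc xs j \<in> set ys" for j
  proof -
    have "ced xs j \<in> range (ced ys)" using loc[OF cj] by (auto simp: ced_def)
    then show ?thesis using edge_in[of "ced xs j" ys] ny by (auto simp: ced_def)
  qed
  obtain v where v: "v \<in> set ys" using ny by fastforce
  then obtain j0 where j0: "v = cyc xs j0" using YX X by auto
  have all: "cyc xs (j0 + t) \<in> set ys" for t
  proof (induction t)
    case 0 then show ?case using v j0 by simp
  next
    case (Suc t) then show ?case using step[of "j0 + t"] by simp
  qed
  have allx: "cyc xs k \<in> set ys" for k
  proof -
    have "cyc xs k = cyc xs (k + j0 * length xs)" by (rule cyc_cong) simp
    moreover have "j0 \<le> j0 * length xs" using nx by (simp add: Suc_leI)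
    then have "k + j0 * length xs = j0 + (k + j0 * length xs - j0)" by linarith
    ultimately show ?thesis using all[of "k + j0 * length xs - j0"] by simp
  qed
  have XY: "set xs \<subseteq> set ys" using allx X by auto
  have "range (ced xs) \<subseteq> range (ced ys)"
  proof
    fix e assume e: "e \<in> range (ced xs)"
    then obtain k where "e = ced xs k" by blast
    then have "cyc xs k \<in> e" by (simp add: ced_def)
    then show "e \<in> range (ced ys)" using loc[OF allx[of k]] e by blast
  qed
  then have "snd (cycle_graph ys) = snd (cycle_graph xs)" using sub EX EY by auto
  moreover have "fst (cycle_graph ys) = fst (cycle_graph xs)" using XY YX by (simp add: cycle_graph_def)
  ultimately show ?thesis by (simp add: prod_eq_iff)
qed



lemma mod_le_cases:
  fixes s t m :: nat
  assumes "s \<le> m" "t \<le> m" "s mod m = t mod m" "0 < m"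
  shows "s = t \<or> (s = 0 \<and> t = m) \<or> (s = m \<and> t = 0)"
proof (cases "s = m")
  case True
  then show ?thesis using assms by (cases "t = m") auto
next
  case False
  then have "s < m" using assms by simp
  show ?thesis
  proof (cases "t = m")
    case True then show ?thesis using assms \<open>s < m\<close> by simp
  next
    case False
    then show ?thesis using assms \<open>s < m\<close> by simp
  qed
qed

locale two_cyc =
  fixes V :: "'a set" and E :: "'a set set" and xs ys :: "'a list"
  assumes dx: "distinct xs" and lx: "3 \<le> length xs" and ox: "odd (length xs)"
    and sx: "subgraph (cycle_graph xs) (V, E)"
    and dy: "distinct ys" and ly: "3 \<le> length ys" and oy: "odd (length ys)"
    and sy: "subgraph (cycle_graph ys) (V, E)"
    and c3: "card (odd_cycles V E) = 3"
    and neq: "cycle_graph xs \<noteq> cycle_graph ys"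
begin

definition bad where "bad k \<longleftrightarrow> ced ys k \<notin> snd (cycle_graph xs)"

definition bridge where "bridge i j \<longleftrightarrow> i < j \<and> j \<le> length ys \<and> cyc ys i \<in> set xs
  \<and> cyc ys j \<in> set xs \<and> (\<forall>t. i < t \<and> t < j \<longrightarrow> cyc ys t \<notin> set xs) \<and> (Suc i < j \<or> bad i)"

lemma nx: "xs \<noteq> []" using lx by auto
lemma ny: "ys \<noteq> []" using ly by auto

lemma EX_sub: "e \<in> snd (cycle_graph xs) \<Longrightarrow> e \<subseteq> set xs"
  using cg_cyc[OF nx] cyc_in[OF nx] by (auto simp: ced_def)

lemma bad_if: "cyc ys k \<notin> set xs \<or> cyc ys (Suc k) \<notin> set xs \<Longrightarrow> bad k"
  using EX_sub unfolding bad_def ced_def by blast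

lemma bridge_bad: assumes "bridge i j" "i \<le> k" "k < j" shows "bad k"
proof (cases "k = i")
  case True
  show ?thesis
  proof (cases "Suc i < j")
    case True
    then have "cyc ys (Suc k) \<notin> set xs" using assms \<open>k = i\<close> unfolding bridge_def by auto
    then show ?thesis using bad_if by blast
  next
    case False
    then show ?thesis using assms \<open>k = i\<close> unfolding bridge_def by auto
  qed
next
  case False
  then have "cyc ys k \<notin> set xs" using assms unfolding bridge_def by auto
  then show ?thesis using bad_if by blast
qed

lemma C1_in: "cycle_graph xs \<in> odd_cycles V E"
  using dx lx ox sx unfolding odd_cycles_def is_odd_cycle_def by auto

lemma C2_in: "cycle_graph ys \<in> odd_cycles V E"
  using dy ly oy sy unfolding odd_cycles_def is_odd_cycle_def by auto

lemma ced_inj: "k < length ys \<Longrightarrow> k' < length ys \<Longrightarrow> ced ys k = ced ys k' \<Longrightarrow> k = k'"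
  using ced_eq[OF dy ly] by simp

lemma EY: "snd (cycle_graph ys) = range (ced ys)" using cg_cyc[OF ny] by simp

lemma bridge_cyc:
  assumes br: "bridge i j" and ne: "cyc ys i \<noteq> cyc ys j"
  shows "\<exists>D\<in>odd_cycles V E. {ced ys k | k. i \<le> k \<and> k < j} \<subseteq> snd D
    \<and> snd D \<subseteq> snd (cycle_graph xs) \<union> {ced ys k | k. i \<le> k \<and> k < j}"
proof -
  let ?m = "length ys"
  let ?f = "cyc ys"
  let ?P = "map ?f [i..<Suc j]"
  have ij: "i < j" "j \<le> ?m" using br unfolding bridge_def by auto
  have inj: "inj_on ?f {i..<Suc j}"
  proof (rule inj_onI)
    fix s t assume s: "s \<in> {i..<Suc j}" and t: "t \<in> {i..<Suc j}" and eq: "?f s = ?f t"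
    then have "s mod ?m = t mod ?m" using cyc_eq[OF dy ny] by simp
    then have "s = t \<or> (s = 0 \<and> t = ?m) \<or> (s = ?m \<and> t = 0)"
      using mod_le_cases[of s ?m t] s t ij ny by simp
    moreover have "\<not> (s = 0 \<and> t = ?m)"
    proof
      assume "s = 0 \<and> t = ?m"
      then have "i = 0" "j = ?m" using s t ij by auto
      then show False using ne cyc_add[of ys 0] by simp
    qed
    moreover have "\<not> (s = ?m \<and> t = 0)"
    proof
      assume "s = ?m \<and> t = 0"
      then have "i = 0" "j = ?m" using s t ij by auto
      then show False using ne cyc_add[of ys 0] by simp
    qed
    ultimately show "s = t" by blast
  qed
  have dP: "distinct ?P" using inj by (simp add: distinct_map del: upt_Suc)
  have lP: "length ?P \<ge> 2" using ij by simp
  have hP: "hd ?P = ?f i" using ij by (simp add: upt_conv_Cons del: upt_Suc)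
  have laP: "last ?P = ?f j" using ij by simp
  have aX: "?f i \<in> set xs" "?f j \<in> set xs" using br unfolding bridge_def by auto
  have setP: "set ?P = ?f ` {i..<Suc j}" by (simp del: upt_Suc)
  have PX: "set ?P \<inter> set xs \<subseteq> {?f i, ?f j}"
  proof
    fix v assume "v \<in> set ?P \<inter> set xs"
    then obtain t where t: "t \<in> {i..<Suc j}" "v = ?f t" "v \<in> set xs" using setP by auto
    then have "\<not> (i < t \<and> t < j)" using br unfolding bridge_def by auto
    then have "t = i \<or> t = j" using t by auto
    then show "v \<in> {?f i, ?f j}" using t by auto
  qed
  have VY: "set ys \<subseteq> V" "snd (cycle_graph ys) \<subseteq> E" using sy by (auto simp: subgraph_def cycle_graph_def)
  have PV: "set ?P \<subseteq> V" using setP cyc_in[OF ny] VY by auto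
  have peP: "pe ?P = {ced ys k | k. i \<le> k \<and> k < j}"
    using pe_upt[of i j ?f] ij by (simp add: ced_def del: upt_Suc)
  have PE: "pe ?P \<subseteq> E" using peP VY EY by auto
  have ch: "length ?P \<ge> 3 \<or> {?f i, ?f j} \<notin> snd (cycle_graph xs)"
  proof (cases "Suc i < j")
    case True
    have "length ?P = Suc j - i" by (simp only: length_map length_upt)
    then show ?thesis using True by linarith
  next
    case False
    then have "j = Suc i" "bad i" using ij br unfolding bridge_def by auto
    then show ?thesis unfolding bad_def ced_def by simp
  qed
  from bridge_cycle[OF dx lx ox sx dP lP hP laP ne aX PX PV PE ch]
  show ?thesis unfolding peP .
qed

lemma fin: "finite (odd_cycles V E)" using c3 by (metis card.infinite zero_neq_numeral)

lemma two_bridges: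
  assumes b1: "bridge i j" and b2: "bridge i' j'" and le: "j \<le> i'"
    and n1: "cyc ys i \<noteq> cyc ys j" and n2: "cyc ys i' \<noteq> cyc ys j'"
  shows False
proof -
  let ?m = "length ys"
  obtain DP where DP: "DP \<in> odd_cycles V E" "{ced ys k | k. i \<le> k \<and> k < j} \<subseteq> snd DP"
    "snd DP \<subseteq> snd (cycle_graph xs) \<union> {ced ys k | k. i \<le> k \<and> k < j}"
    using bridge_cyc[OF b1 n1] by blast
  obtain DQ where DQ: "DQ \<in> odd_cycles V E" "{ced ys k | k. i' \<le> k \<and> k < j'} \<subseteq> snd DQ"
    "snd DQ \<subseteq> snd (cycle_graph xs) \<union> {ced ys k | k. i' \<le> k \<and> k < j'}"
    using bridge_cyc[OF b2 n2] by blast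
  have r: "i < j" "j \<le> ?m" "i' < j'" "j' \<le> ?m" using b1 b2 unfolding bridge_def by auto
  have eP: "ced ys i \<in> snd DP" using DP(2) r by blast
  have eQ: "ced ys i' \<in> snd DQ" using DQ(2) r by blast
  have nP: "ced ys i \<notin> snd (cycle_graph xs)" using bridge_bad[OF b1, of i] r unfolding bad_def by simp
  have nQ: "ced ys i' \<notin> snd (cycle_graph xs)" using bridge_bad[OF b2, of i'] r unfolding bad_def by simp
  have QnP: "ced ys i' \<notin> snd DP"
  proof
    assume "ced ys i' \<in> snd DP"
    then obtain k where k: "ced ys i' = ced ys k" "i \<le> k" "k < j" using DP(3) nQ by blast
    then have "i' = k" using ced_inj[of i' k] r le by simp
    then show False using k le by simp
  qed
  have PnQ: "ced ys i \<notin> snd DQ"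
  proof
    assume "ced ys i \<in> snd DQ"
    then obtain k where k: "ced ys i = ced ys k" "i' \<le> k" "k < j'" using DQ(3) nP by blast
    then have "i = k" using ced_inj[of i k] r le by simp
    then show False using k le r by simp
  qed
  have inY: "ced ys i \<in> snd (cycle_graph ys)" "ced ys i' \<in> snd (cycle_graph ys)" using EY by auto
  have d: "cycle_graph xs \<noteq> DP" "cycle_graph xs \<noteq> DQ" "cycle_graph ys \<noteq> DP"
    "cycle_graph ys \<noteq> DQ" "DP \<noteq> DQ"
    using eP eQ nP nQ QnP PnQ inY by auto
  have "card {cycle_graph xs, cycle_graph ys, DP, DQ} = 4" using d neq by simp
  moreover have "{cycle_graph xs, cycle_graph ys, DP, DQ} \<subseteq> odd_cycles V E"
    using C1_in C2_in DP(1) DQ(1) by simp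
  ultimately have "4 \<le> card (odd_cycles V E)" using card_mono[OF fin] by metis
  then show False using c3 by simp
qed

lemma bridge_from:
  assumes "k \<le> l" "l < length ys" "cyc ys k \<in> set xs" "cyc ys 0 \<in> set xs" "bad l"
  shows "\<exists>i j. bridge i j \<and> k \<le> i \<and> i \<le> l \<and> l < j"
proof -
  let ?m = "length ys"
  define A where "A = {t. k \<le> t \<and> t \<le> l \<and> cyc ys t \<in> set xs}"
  define B where "B = {t. l < t \<and> t \<le> ?m \<and> cyc ys t \<in> set xs}"
  have fA: "finite A" unfolding A_def by (rule finite_subset[of _ "{..l}"]) auto
  have fB: "finite B" unfolding B_def by (rule finite_subset[of _ "{..?m}"]) auto
  have kA: "k \<in> A" using assms unfolding A_def by simp
  have mB: "?m \<in> B" using assms cyc_add[of ys 0] unfolding B_def by simp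
  define i where "i = Max A"
  define j where "j = Min B"
  have iA: "i \<in> A" unfolding i_def using fA kA Max_in by blast
  have jB: "j \<in> B" unfolding j_def using fB mB Min_in by blast
  have int: "cyc ys t \<notin> set xs" if "i < t" "t < j" for t
  proof
    assume tx: "cyc ys t \<in> set xs"
    show False
    proof (cases "t \<le> l")
      case True
      then have "t \<in> A" using tx iA that unfolding A_def by simp
      then have "t \<le> i" unfolding i_def using fA Max_ge by blast
      then show False using that by simp
    next
      case False
      then have "t \<in> B" using tx jB that unfolding B_def by simp
      then have "j \<le> t" unfolding j_def using fB Min_le by blast
      then show False using that by simp
    qed
  qed
  have "Suc i < j \<or> bad i"
  proof (cases "Suc i < j")
    case False
    then have "i = l" using iA jB unfolding A_def B_def by simp
    then show ?thesis using assms by simp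
  qed simp
  then have "bridge i j" using iA jB int unfolding bridge_def A_def B_def by auto
  then show ?thesis using iA jB unfolding A_def B_def by auto
qed

end



context two_cyc begin

lemma main:
  assumes c0: "cyc ys 0 \<in> set xs" and bl: "bad (length ys - 1)"
    and t: "0 < t" "t < length ys" "cyc ys t \<in> set xs"
  shows "is_path (graph_inter (cycle_graph xs) (cycle_graph ys))"
proof -
  let ?m = "length ys"
  have m0: "0 < ?m" using ny by simp
  obtain i j where br: "bridge i j" "0 \<le> i" "i \<le> ?m - 1" "?m - 1 < j"
    using bridge_from[of 0 "?m - 1"] c0 bl m0 by auto
  have jm: "j = ?m" using br unfolding bridge_def by auto
  have im: "i < ?m" using br jm unfolding bridge_def by auto
  have i0: "i \<noteq> 0"
  proof
    assume "i = 0"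
    then show False using br(1) jm t unfolding bridge_def by auto
  qed
  have cm: "cyc ys ?m = cyc ys 0" using cyc_add[of ys 0] by simp
  have nei: "cyc ys i \<noteq> cyc ys j"
    using jm cm i0 im cyc_eq[OF dy ny, of i 0] by simp
  have good: "\<not> bad k" if ki: "k < i" for k
  proof
    assume bk: "bad k"
    obtain i' j' where b2: "bridge i' j'" "i' \<le> k" "k < j'"
      using bridge_from[of 0 k] bk c0 ki im by auto
    have "j' \<le> i"
    proof (rule ccontr)
      assume "\<not> j' \<le> i"
      then have "cyc ys i \<notin> set xs" using b2 ki unfolding bridge_def by auto
      then show False using br unfolding bridge_def by auto
    qed
    moreover have "cyc ys i' \<noteq> cyc ys j'"
    proof -
      have "i' < j'" "j' < ?m" using b2 \<open>j' \<le> i\<close> im unfolding bridge_def by auto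
      then show ?thesis using cyc_eq[OF dy ny, of i' j'] by simp
    qed
    ultimately show False using two_bridges[OF b2(1) br(1) _ _ nei] by blast
  qed
  have inX: "cyc ys s \<in> set xs" if "s \<le> i" for s
  proof (cases s)
    case 0 then show ?thesis using c0 by simp
  next
    case (Suc r)
    then have "ced ys r \<in> snd (cycle_graph xs)" using good[of r] that unfolding bad_def by simp
    then have "ced ys r \<subseteq> set xs" by (rule EX_sub)
    then show ?thesis using Suc by (simp add: ced_def)
  qed
  let ?zs = "take (Suc i) ys"
  have lz: "length ?zs = Suc i" using im by simp
  have nz: "\<And>s. s < Suc i \<Longrightarrow> ?zs ! s = ys ! s" by simp
  have V: "set xs \<inter> set ys = set ?zs"
  proof
    show "set xs \<inter> set ys \<subseteq> set ?zs"
    proof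
      fix v assume v: "v \<in> set xs \<inter> set ys"
      then obtain s where s: "s < ?m" "v = ys ! s" by (metis IntD2 in_set_conv_nth)
      have "s \<le> i"
      proof (rule ccontr)
        assume "\<not> s \<le> i"
        then have "cyc ys s \<notin> set xs" using br jm s unfolding bridge_def by auto
        then show False using v s cyc_lt[of s ys] by simp
      qed
      then show "v \<in> set ?zs" using s lz nz[of s] by (metis in_set_conv_nth less_Suc_eq_le)
    qed
    show "set ?zs \<subseteq> set xs \<inter> set ys"
    proof
      fix v assume "v \<in> set ?zs"
      then obtain s where s: "s < Suc i" "v = ?zs ! s" by (metis in_set_conv_nth lz)
      then have "v = ys ! s" "s < ?m" using nz im by auto
      then show "v \<in> set xs \<inter> set ys" using inX[of s] s cyc_lt[of s ys] by auto
    qed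
  qed
  have Ed: "snd (cycle_graph xs) \<inter> snd (cycle_graph ys) = {{?zs ! s, ?zs ! Suc s} | s. Suc s < length ?zs}"
  proof
    show "snd (cycle_graph xs) \<inter> snd (cycle_graph ys) \<subseteq> {{?zs ! s, ?zs ! Suc s} | s. Suc s < length ?zs}"
    proof
      fix e assume e: "e \<in> snd (cycle_graph xs) \<inter> snd (cycle_graph ys)"
      then obtain k where k: "e = ced ys k" using EY by auto
      let ?k = "k mod ?m"
      have k': "e = ced ys ?k" "?k < ?m" using k ced_mod[of ys k] m0 by auto
      have "?k < i"
      proof (rule ccontr)
        assume "\<not> ?k < i"
        then have "bad ?k" using bridge_bad[OF br(1), of ?k] k' jm by simp
        then show False using e k' unfolding bad_def by simp
      qed
      then have "e = {?zs ! ?k, ?zs ! Suc ?k}" using k' nz cyc_lt[of ?k ys] cyc_lt[of "Suc ?k" ys] im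
        by (simp add: ced_def)
      moreover have "Suc ?k < length ?zs" using \<open>?k < i\<close> lz by simp
      ultimately show "e \<in> {{?zs ! s, ?zs ! Suc s} | s. Suc s < length ?zs}" by blast
    qed
    show "{{?zs ! s, ?zs ! Suc s} | s. Suc s < length ?zs} \<subseteq> snd (cycle_graph xs) \<inter> snd (cycle_graph ys)"
    proof
      fix e assume "e \<in> {{?zs ! s, ?zs ! Suc s} | s. Suc s < length ?zs}"
      then obtain s where s: "e = {?zs ! s, ?zs ! Suc s}" "Suc s < length ?zs" by blast
      then have si: "s < i" using lz by simp
      then have "e = ced ys s" using s nz cyc_lt[of s ys] cyc_lt[of "Suc s" ys] im lz
        by (simp add: ced_def)
      then show "e \<in> snd (cycle_graph xs) \<inter> snd (cycle_graph ys)"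
        using good[OF si] EY unfolding bad_def by auto
    qed
  qed
  have "graph_inter (cycle_graph xs) (cycle_graph ys) = path_graph ?zs"
    using V Ed by (simp add: graph_inter_def path_graph_def cycle_graph_def)
  moreover have "distinct ?zs" "?zs \<noteq> []" using dy m0 by auto
  ultimately show ?thesis unfolding is_path_def by blast
qed

end



lemma ced_add: "ced vs (k + length vs) = ced vs k"
proof -
  have "cyc vs (Suc (k + length vs)) = cyc vs (Suc k)" using cyc_add[of vs "Suc k"] by simp
  then show ?thesis by (simp add: ced_def)
qed

lemma mod_Suc_neq: "2 \<le> (m::nat) \<Longrightarrow> k mod m \<noteq> Suc k mod m"
  by (simp add: mod_Suc)

lemma final_step:
  assumes tc: "two_cyc V E xs ys" and u: "u \<in> set xs" "u \<in> set ys" and w: "w \<in> set xs" "w \<in> set ys"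
    and uw: "u \<noteq> w"
  shows "is_path (graph_inter (cycle_graph xs) (cycle_graph ys))"
proof -
  interpret Y: two_cyc V E xs ys by (rule tc)
  let ?m = "length ys"
  have m0: "0 < ?m" using Y.ny by simp
  obtain r where r: "r < ?m" "ys ! r = u" using u by (metis in_set_conv_nth)
  define ys1 where "ys1 = rotate r ys"
  have y1: "distinct ys1" "length ys1 = ?m" "cycle_graph ys1 = cycle_graph ys" "set ys1 = set ys"
    unfolding ys1_def by (simp_all add: Y.dy cg_rotate)
  have tc1: "two_cyc V E xs ys1"
    using Y.dx Y.lx Y.ox Y.sx Y.ly Y.oy Y.sy Y.c3 Y.neq y1 by unfold_locales simp_all
  interpret Y1: two_cyc V E xs ys1 by (rule tc1)
  have c10: "cyc ys1 0 = u" unfolding ys1_def using cyc_rotate[OF Y.ny, of r 0] r cyc_lt[of r ys] by simp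
  have "\<exists>l. Y1.bad l"
  proof (rule ccontr)
    assume "\<not> (\<exists>l. Y1.bad l)"
    then have "snd (cycle_graph ys1) \<subseteq> snd (cycle_graph xs)" using Y1.EY unfolding Y1.bad_def by auto
    then have "cycle_graph ys1 = cycle_graph xs" using cycle_sub Y.dx Y.lx Y1.dy Y1.ly by blast
    then show False using Y.neq y1 by simp
  qed
  then obtain l0 where "Y1.bad l0" by blast
  then have bl: "Y1.bad (l0 mod ?m)" "l0 mod ?m < ?m" using ced_mod[of ys1 l0] y1 m0 unfolding Y1.bad_def by auto
  obtain i j where br: "Y1.bridge i j" "i \<le> l0 mod ?m" "l0 mod ?m < j"
    using Y1.bridge_from[of 0 "l0 mod ?m"] bl c10 u y1 by auto
  have j: "1 \<le> j" "j \<le> ?m" "cyc ys1 j \<in> set xs" using br unfolding Y1.bridge_def y1 by auto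
  have bj: "Y1.bad (j - 1)" using Y1.bridge_bad[OF br(1), of "j - 1"] br unfolding Y1.bridge_def by auto
  define ys2 where "ys2 = rotate j ys1"
  have ne1: "ys1 \<noteq> []" using y1 m0 by auto
  have y2: "distinct ys2" "length ys2 = ?m" "cycle_graph ys2 = cycle_graph ys" "set ys2 = set ys"
    unfolding ys2_def by (simp_all add: y1 cg_rotate)
  have tc2: "two_cyc V E xs ys2"
    using Y.dx Y.lx Y.ox Y.sx Y.ly Y.oy Y.sy Y.c3 Y.neq y2 by unfold_locales simp_all
  interpret Y2: two_cyc V E xs ys2 by (rule tc2)
  have c2: "cyc ys2 t = cyc ys1 (j + t)" for t unfolding ys2_def using cyc_rotate[OF ne1] by simp
  have c20: "cyc ys2 0 \<in> set xs" using c2[of 0] j by simp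
  have "ced ys2 (?m - 1) = ced ys1 (j + (?m - 1))"
  proof -
    have s1: "Suc (?m - 1) = ?m" using m0 by simp
    have s2: "Suc (j + (?m - 1)) = j + ?m" using m0 by simp
    have "cyc ys2 (Suc (?m - 1)) = cyc ys1 (Suc (j + (?m - 1)))" using c2[of "Suc (?m - 1)"] s1 s2 by simp
    then show ?thesis using c2[of "?m - 1"] unfolding ced_def by simp
  qed
  also have "j + (?m - 1) = (j - 1) + length ys1" using j m0 y1 by simp
  finally have "ced ys2 (?m - 1) = ced ys1 (j - 1)" using ced_add[of ys1 "j - 1"] by simp
  then have bl2: "Y2.bad (length ys2 - 1)" using bj y2 unfolding Y1.bad_def Y2.bad_def by simp
  obtain v where v: "v \<in> set xs" "v \<in> set ys" "v \<noteq> cyc ys2 0" using u w uw by blast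
  have ne2: "ys2 \<noteq> []" using y2 m0 by auto
  have "v \<in> range (cyc ys2)" using set_cyc[OF ne2] y2 v by auto
  then obtain t' where "v = cyc ys2 t'" by blast
  then have vt: "v = cyc ys2 (t' mod ?m)" using cyc_mod[of ys2 t'] y2 by simp
  have "t' mod ?m \<noteq> 0"
  proof
    assume "t' mod ?m = 0"
    then show False using vt v(3) by simp
  qed
  moreover have "t' mod ?m < length ys2" using m0 y2 by simp
  ultimately have "is_path (graph_inter (cycle_graph xs) (cycle_graph ys2))"
    using Y2.main[OF c20 bl2, of "t' mod ?m"] vt v by simp
  then show ?thesis using y2 by simp
qed

theorem lemma2p3:
  fixes V :: "'a set" and E :: "'a set set"
  assumes "simple_graph V E"
    and "card (odd_cycles V E) = 3"
    and "C1 \<in> odd_cycles V E" and "C2 \<in> odd_cycles V E" and "C1 \<noteq> C2"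
  shows "fst (graph_inter C1 C2) = {} \<or> is_path (graph_inter C1 C2)"
proof -
  obtain xs where xs: "C1 = cycle_graph xs" "distinct xs" "3 \<le> length xs" "odd (length xs)"
    "subgraph C1 (V, E)"
    using assms(3) unfolding odd_cycles_def is_odd_cycle_def by auto
  obtain ys where ys: "C2 = cycle_graph ys" "distinct ys" "3 \<le> length ys" "odd (length ys)"
    "subgraph C2 (V, E)"
    using assms(4) unfolding odd_cycles_def is_odd_cycle_def by auto
  have tc: "two_cyc V E xs ys"
    using xs ys assms(2,5) by unfold_locales simp_all
  interpret Y: two_cyc V E xs ys by (rule tc)
  have fi: "fst (graph_inter C1 C2) = set xs \<inter> set ys"
    using xs ys by (simp add: graph_inter_def cycle_graph_def)
  show ?thesis
  proof (cases "set xs \<inter> set ys = {}")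
    case True then show ?thesis using fi by simp
  next
    case False
    then obtain u where u: "u \<in> set xs" "u \<in> set ys" by blast
    show ?thesis
    proof (cases "\<exists>w. w \<in> set xs \<and> w \<in> set ys \<and> w \<noteq> u")
      case True
      then obtain w where "w \<in> set xs" "w \<in> set ys" "u \<noteq> w" by blast
      then show ?thesis using final_step[OF tc u] xs ys by simp
    next
      case False
      then have one: "set xs \<inter> set ys = {u}" using u by blast
      have "snd C1 \<inter> snd C2 = {}"
      proof (rule ccontr)
        assume "snd C1 \<inter> snd C2 \<noteq> {}"
        then obtain e where e: "e \<in> snd C1" "e \<in> snd C2" by blast
        then obtain k where k: "e = ced ys k" using Y.EY ys by auto
        have "e \<subseteq> set xs" using Y.EX_sub e xs by simp
        moreover have "e \<subseteq> set ys" using k cyc_in[OF Y.ny] by (auto simp: ced_def)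
        ultimately have "cyc ys k = u" "cyc ys (Suc k) = u" using one k by (auto simp: ced_def)
        then have "cyc ys k = cyc ys (Suc k)" by simp
        then have "k mod length ys = Suc k mod length ys" using cyc_eq[OF Y.dy Y.ny, of k "Suc k"] by simp
        then show False using mod_Suc_neq[of "length ys" k] ys by simp
      qed
      then have "graph_inter C1 C2 = path_graph [u]"
        using one xs ys by (simp add: graph_inter_def cycle_graph_def path_graph_def)
      then have "is_path (graph_inter C1 C2)" unfolding is_path_def by (intro exI[of _ "[u]"]) simp
      then show ?thesis by simp
    qed
  qed
qed


end
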